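(* Let $\Bbbk$ be a field, $\mathcal A$ a $\Bbbk$-algebra, and $f(t)=1+\sum_{k\ge 1}a_kt^k\in\Bbbk[[t]]$ with $a_k\ne 0$ for all $k\ge 1$. For $k\ge 1$ let $P_{f,k}(t)$ be the polynomial $$P_{f,k}(t)=(-1)^k\det\begin{pmatrix} 1&a_1t&a_2t^2&\ldots &a_kt^k\\ 1&a_1&a_2&\ldots &a_k\\ 0&1&a_1&\ldots &a_{k-1}\\ \vdots&\vdots&\ddots&\ddots&\vdots\\ 0&0&\ldots &1&a_1 \end{pmatrix},$$ and let ${\bf q}_k=\{q_{1k},\dots,q_{kk}\}$ be its roots (with multiplicity, in an algebraic closure of $\Bbbk$). Then for all $x,y\in\mathcal A$, $$f(x)\,y\,f(x)^{-1}=y+\sum_{k\ge 1}a_k\,(\mathrm{ad}\,x)^{{\bf q}_k}(y).$$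
   Context: For $q\in\Bbbk$ put $[a,b]_q=ab-qba$. For ${\bf q}=\{q_1,\dots,q_k\}$, $(\mathrm{ad}\,x)^{\bf q}(y)=[x,[x,\ldots,[x,y]_{q_1},\ldots]_{q_{k-1}}]_{q_k}$, which equals $\sum_{j=0}^k(-1)^je_j(q_1,\dots,q_k)\,x^{k-j}yx^j$ ($e_j$ the $j$-th elementary symmetric function); since the elementary symmetric functions of the roots of $P_{f,k}$ lie in $\Bbbk$, this operator is defined over $\Bbbk$. The infinite sums are understood formally: e.g. replace $x$ by $\tau x$ for a formal variable $\tau$, so that both sides are identities in $\mathcal A[[\tau]]$ (the $k$-th term acquiring the factor $\tau^k$). *)

theory Defs
  imports "HOL-Algebra.Algebraic_Closure_Type"
          "HOL-Computational_Algebra.Formal_Power_Series"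
          "Jordan_Normal_Form.Determinant"
begin

text \<open>The sequence a is indexed from 0 with the convention a 0 = 1 (so f = sum a_n t^n).\<close>
definition Pmat :: "(nat \<Rightarrow> 'k::field) \<Rightarrow> nat \<Rightarrow> 'k poly mat" where
  "Pmat a k = mat (k+1) (k+1) (\<lambda>(i,j).
      if i = 0 then monom (a j) j
      else if i - 1 \<le> j then [: a (j + 1 - i) :] else 0)"

definition Pfk :: "(nat \<Rightarrow> 'k::field) \<Rightarrow> nat \<Rightarrow> 'k poly" where
  "Pfk a k = smult ((-1) ^ k) (det (Pmat a k))"

definition esym :: "nat \<Rightarrow> nat \<Rightarrow> (nat \<Rightarrow> 'b::comm_ring_1) \<Rightarrow> 'b" where
  "esym j k q = (\<Sum>S\<in>{S. S \<subseteq> {1..k} \<and> card S = j}. \<Prod>i\<in>S. q i)"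

text \<open>(ad x)^{q}(y) = sum_j (-1)^j e_j(q) x^(k-j) y x^j, for q = (q_1..q_k) roots in the
  algebraic closure; the scalars e_j(q) lie in k and act on A via the structure map phi.\<close>
definition adq :: "('k::field \<Rightarrow> 'a::ring_1) \<Rightarrow> nat \<Rightarrow> (nat \<Rightarrow> 'k alg_closure) \<Rightarrow> 'a \<Rightarrow> 'a \<Rightarrow> 'a" where
  "adq phi k q x y = (\<Sum>j=0..k. (-1) ^ j * phi (of_ac (esym j k q)) * x ^ (k - j) * y * x ^ j)"

end

theory Submission
  imports Defs
begin

lemma coeff_prod_linear:
  fixes q :: "nat \<Rightarrow> 'b::comm_ring_1"
  assumes "finite S"
  shows "coeff (\<Prod>i\<in>S. [:- q i, 1:]) k = (\<Sum>T\<in>{T. T \<subseteq> S \<and> card T + k = card S}. \<Prod>i\<in>T. - q i)"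
  using assms
proof (induction S arbitrary: k rule: finite_induct)
  case empty
  have e: "{T. T \<subseteq> {} \<and> card T + k = card ({}::nat set)} = (if k = 0 then {{}} else {})" by auto
  show ?case by (subst e) simp
next
  case (insert s S)
  let ?P = "\<Prod>i\<in>S. [:- q i, 1:]"
  have fin: "finite {T. T \<subseteq> S \<and> card T + j = card S}" for j
    using insert(1) by (rule finite_subset[rotated, OF finite_Pow_iff[THEN iffD2]]) auto
  have finA: "finite {T. T \<subseteq> S \<and> card T + k = card S + 1}"
    using insert(1) by (rule finite_subset[rotated, OF finite_Pow_iff[THEN iffD2]]) auto
  have prod: "(\<Prod>i\<in>insert s S. [:- q i, 1:]) = smult (- q s) ?P + pCons 0 ?P"
    using insert by (simp add: mult_pCons_left)
  have lhs: "coeff (\<Prod>i\<in>insert s S. [:- q i, 1:]) k = - q s * coeff ?P k + (case k of 0 \<Rightarrow> 0 | Suc j \<Rightarrow> coeff ?P j)"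
    unfolding prod by (simp add: coeff_pCons split: nat.split)
  have splitT: "{T. T \<subseteq> insert s S \<and> card T + k = card (insert s S)} =
      {T. T \<subseteq> S \<and> card T + k = card S + 1} \<union> insert s ` {T. T \<subseteq> S \<and> card T + k = card S}"
  proof (rule Set.set_eqI, rule iffI)
    fix T assume T: "T \<in> {T. T \<subseteq> insert s S \<and> card T + k = card (insert s S)}"
    have Tsub: "T \<subseteq> insert s S" and Tc: "card T + k = card S + 1"
      using T insert(1,2) by simp_all
    have finT: "finite T" using Tsub insert(1) finite_subset by blast
    show "T \<in> {T. T \<subseteq> S \<and> card T + k = card S + 1} \<union> insert s ` {T. T \<subseteq> S \<and> card T + k = card S}"
    proof (cases "s \<in> T")
      case True
      have "T - {s} \<subseteq> S" using Tsub by blast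
      moreover have "card (T - {s}) + 1 = card T"
      proof -
        have "card T > 0" using True finT card_gt_0_iff by blast
        then show ?thesis using True finT by (simp add: card_Diff_singleton)
      qed
      ultimately have "T - {s} \<in> {T. T \<subseteq> S \<and> card T + k = card S}"
        using Tc by simp
      moreover have "T = insert s (T - {s})" using True by blast
      ultimately show ?thesis by blast
    next
      case False
      then have "T \<subseteq> S" using Tsub by blast
      then show ?thesis using Tc by blast
    qed
  next
    fix T assume "T \<in> {T. T \<subseteq> S \<and> card T + k = card S + 1} \<union> insert s ` {T. T \<subseteq> S \<and> card T + k = card S}"
    then show "T \<in> {T. T \<subseteq> insert s S \<and> card T + k = card (insert s S)}"
    proof
      assume "T \<in> {T. T \<subseteq> S \<and> card T + k = card S + 1}"
      then show ?thesis using insert(1,2) by auto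
    next
      assume "T \<in> insert s ` {T. T \<subseteq> S \<and> card T + k = card S}"
      then obtain T' where T': "T' \<subseteq> S" "card T' + k = card S" "T = insert s T'" by blast
      have "finite T'" using T'(1) insert(1) finite_subset by blast
      moreover have "s \<notin> T'" using T'(1) insert(2) by blast
      ultimately have "card T = card T' + 1" using T'(3) by simp
      then show ?thesis using T' insert(1,2) by auto
    qed
  qed
  have disj: "{T. T \<subseteq> S \<and> card T + k = card S + 1} \<inter> insert s ` {T. T \<subseteq> S \<and> card T + k = card S} = {}"
    using insert(2) by auto
  have inj: "inj_on (insert s) {T. T \<subseteq> S \<and> card T + k = card S}"
  proof (rule inj_onI)
    fix A B assume "A \<in> {T. T \<subseteq> S \<and> card T + k = card S}" "B \<in> {T. T \<subseteq> S \<and> card T + k = card S}"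
      "insert s A = insert s B"
    then show "A = B" using insert(2) by (metis insert_ident mem_Collect_eq subsetD)
  qed
  have sumB: "(\<Sum>T\<in>insert s ` {T. T \<subseteq> S \<and> card T + k = card S}. \<Prod>i\<in>T. - q i)
      = - q s * (\<Sum>T\<in>{T. T \<subseteq> S \<and> card T + k = card S}. \<Prod>i\<in>T. - q i)"
    apply (subst sum.reindex[OF inj])
    apply (simp add: sum_distrib_left)
    apply (rule sum.cong[OF refl])
    using insert by (subst prod.insert) (auto intro: finite_subset)
  have sumA: "(\<Sum>T\<in>{T. T \<subseteq> S \<and> card T + k = card S + 1}. \<Prod>i\<in>T. - q i) = (case k of 0 \<Rightarrow> 0 | Suc j \<Rightarrow> coeff ?P j)"
  proof (cases k)
    case 0
    have E: "{T. T \<subseteq> S \<and> card T + k = card S + 1} = {}"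
      using 0 insert(1) by (auto dest: card_mono)
    show ?thesis unfolding E using 0 by simp
  next
    case (Suc j)
    then show ?thesis using insert.IH[of j] by simp
  qed
  show ?case
    unfolding lhs splitT
    apply (subst sum.union_disjoint)
    using finA fin disj sumA sumB insert.IH[of k] by auto
qed

lemma coeff_prod_esym:
  fixes q :: "nat \<Rightarrow> 'b::comm_ring_1"
  assumes "k \<le> n"
  shows "coeff (\<Prod>i=1..n. [:- q i, 1:]) k = (-1)^(n-k) * esym (n-k) n q"
proof -
  have E: "{T. T \<subseteq> {1..n} \<and> card T + k = card {1..n}} = {S. S \<subseteq> {1..n} \<and> card S = n - k}"
    using assms by auto
  have "coeff (\<Prod>i=1..n. [:- q i, 1:]) k = (\<Sum>T\<in>{S. S \<subseteq> {1..n} \<and> card S = n - k}. \<Prod>i\<in>T. - q i)"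
    by (subst coeff_prod_linear) (simp_all only: E finite_atLeastAtMost)
  also have "\<dots> = (\<Sum>T\<in>{S. S \<subseteq> {1..n} \<and> card S = n - k}. (-1)^(n-k) * (\<Prod>i\<in>T. q i))"
    by (rule sum.cong[OF refl]) (simp add: prod_uminus)
  finally show ?thesis by (simp add: esym_def sum_distrib_left)
qed

lemma conv_shift:
  fixes a b :: "nat \<Rightarrow> 'k::comm_ring_1"
  assumes conv: "\<And>m. m \<ge> 1 \<Longrightarrow> (\<Sum>i=0..m. a i * b (m-i)) = 0"
    and m: "m \<ge> 1"
  shows "(\<Sum>c\<in>{0..<d+m+1}. (if d \<le> c then a (c-d) else 0) * b (d+m-c)) = 0"
proof -
  have "(\<Sum>c\<in>{0..<d+m+1}. (if d \<le> c then a (c-d) else 0) * b (d+m-c))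
      = (\<Sum>c\<in>{0+d..m+d}. (if d \<le> c then a (c-d) else 0) * b (d+m-c))"
    by (rule sum.mono_neutral_right) auto
  also have "\<dots> = (\<Sum>i=0..m. a i * b (m-i))"
    by (subst sum.shift_bounds_cl_nat_ivl) simp
  finally show ?thesis using conv m by simp
qed

lemma const_poly_sum: "(\<Sum>x\<in>A. [:f x:]) = [:\<Sum>x\<in>A. f x:]"
  by (simp add: monom_0[symmetric] monom_sum)

lemma Pfk_eq:
  fixes a b :: "nat \<Rightarrow> 'k::field"
  assumes a0: "a 0 = 1" and b0: "b 0 = 1"
    and conv: "\<And>m. m \<ge> 1 \<Longrightarrow> (\<Sum>i=0..m. a i * b (m-i)) = 0"
  shows "Pfk a n = (\<Sum>c=0..n. monom (a c * b (n-c)) c)"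
proof -
  define M where "M = Pmat a n"
  define s where "s = (\<Sum>c=0..n. monom (a c * b (n-c)) c)"
  define w where "w = vec (n+1) (\<lambda>c. [:b (n-c):])"
  define v where "v = vec (n+1) (\<lambda>i. if i = 0 then s else 0)"
  have M: "M \<in> carrier_mat (n+1) (n+1)" unfolding M_def Pmat_def by simp
  have w: "w \<in> carrier_vec (n+1)" unfolding w_def by simp
  have Mw: "M *\<^sub>v w = v"
  proof (rule eq_vecI)
    show "dim_vec (M *\<^sub>v w) = dim_vec v" using M unfolding v_def by simp
    fix i assume "i < dim_vec v"
    then have i: "i < n+1" unfolding v_def by simp
    have "(M *\<^sub>v w) $ i = row M i \<bullet> w" using M i by simp
    also have "\<dots> = (\<Sum>c\<in>{0..<n+1}. M $$ (i,c) * [:b (n-c):])"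
      unfolding scalar_prod_def using M i w by (intro sum.cong) (auto simp: w_def)
    also have "\<dots> = v $ i"
    proof (cases "i = 0")
      case True
      have "(\<Sum>c\<in>{0..<n+1}. M $$ (i,c) * [:b (n-c):]) = (\<Sum>c\<in>{0..<n+1}. monom (a c * b (n-c)) c)"
        using True by (intro sum.cong refl) (simp add: M_def Pmat_def smult_monom mult.commute)
      also have "\<dots> = s" unfolding s_def by (rule sum.cong) auto
      finally show ?thesis using True i unfolding v_def by simp
    next
      case False
      have "(\<Sum>c\<in>{0..<n+1}. M $$ (i,c) * [:b (n-c):]) = (\<Sum>c\<in>{0..<n+1}. [:(if i - 1 \<le> c then a (c - (i-1)) else 0) * b ((i-1) + (n+1-i) - c):])"
        using False i by (intro sum.cong refl) (auto simp: M_def Pmat_def)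
      also have "\<dots> = [:\<Sum>c\<in>{0..<n+1}. (if i - 1 \<le> c then a (c - (i-1)) else 0) * b ((i-1) + (n+1-i) - c):]"
        by (rule const_poly_sum)
      also have "(\<Sum>c\<in>{0..<n+1}. (if i - 1 \<le> c then a (c - (i-1)) else 0) * b ((i-1) + (n+1-i) - c)) = 0"
        using conv_shift[OF conv, of "n+1-i" "i-1"] False i by simp
      finally show ?thesis using False i unfolding v_def by simp
    qed
    finally show "(M *\<^sub>v w) $ i = v $ i" .
  qed
  define R where "R = replace_col M v n"
  have R: "R \<in> carrier_mat (n+1) (n+1)" using M unfolding R_def replace_col_def by auto
  have "det R = w $ n * det M" using cramer_lemma_mat[OF M w, of n] unfolding R_def Mw by simp
  also have "w $ n = 1" unfolding w_def using b0 by simp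
  finally have detR: "det R = det M" by simp
  define D where "D = mat_delete R 0 n"
  have D: "D \<in> carrier_mat n n" using mat_delete_carrier[OF R] unfolding D_def by simp
  have Dij: "D $$ (i,j) = (if i \<le> j then [:a (j - i):] else 0)" if "i < n" "j < n" for i j
    using that M unfolding D_def mat_delete_def R_def replace_col_def M_def Pmat_def v_def
    by (auto simp: Suc_diff_le)
  have "upper_triangular D" using D Dij unfolding upper_triangular_def by auto
  then have "det D = prod_list (diag_mat D)" using det_upper_triangular D by blast
  also have "\<dots> = 1" using D Dij a0 by (simp add: prod_list_diag_prod one_pCons[symmetric])
  finally have detD: "det D = 1" .
  have "det R = (\<Sum>i<n+1. R $$ (i,n) * cofactor R i n)"
    by (rule laplace_expansion_column[OF R]) simp
  also have "\<dots> = (\<Sum>i<n+1. (if i = 0 then s * cofactor R 0 n else 0))"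
    by (rule sum.cong) (auto simp: R_def replace_col_def v_def M_def Pmat_def)
  also have "\<dots> = s * cofactor R 0 n" by simp
  also have "\<dots> = s * (-1)^n" unfolding cofactor_def D_def[symmetric] detD by simp
  finally have "det M = s * (-1)^n" using detR by simp
  then have "Pfk a n = smult ((-1)^n) (s * (-1)^n)" unfolding Pfk_def M_def by simp
  also have "\<dots> = s"
    by (cases "even n") (simp_all)
  finally show ?thesis unfolding s_def .
qed


theorem theorem1p2:
  fixes phi :: "'k::field \<Rightarrow> 'a::ring_1"
    and a :: "nat \<Rightarrow> 'k"
    and q :: "nat \<Rightarrow> nat \<Rightarrow> 'k alg_closure"
    and x y :: 'a
  assumes phi_1: "phi 1 = 1"
    and phi_add: "\<And>c d. phi (c + d) = phi c + phi d"
    and phi_mult: "\<And>c d. phi (c * d) = phi c * phi d"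
    and phi_central: "\<And>c z. phi c * z = z * phi c"
    and a0: "a 0 = 1"
    and a_nz: "\<And>k. k \<ge> 1 \<Longrightarrow> a k \<noteq> 0"
    and roots: "\<And>k. k \<ge> 1 \<Longrightarrow>
        map_poly to_ac (Pfk a k) =
        smult (lead_coeff (map_poly to_ac (Pfk a k))) (\<Prod>i=1..k. [:- q k i, 1:])"
  shows "Abs_fps (\<lambda>n. phi (a n) * x ^ n) * fps_const y
           * fps_right_inverse (Abs_fps (\<lambda>n. phi (a n) * x ^ n)) 1
         = Abs_fps (\<lambda>n. if n = 0 then y else phi (a n) * adq phi n (q n) x y)"
proof -
  define b where "b = fps_nth (inverse (Abs_fps a))"
  have A0: "Abs_fps a $ 0 \<noteq> 0" using a0 by simp
  have b0: "b 0 = 1" unfolding b_def using a0 by simp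
  have conv: "(\<Sum>i=0..m. a i * b (m-i)) = 0" if "m \<ge> 1" for m
  proof -
    have "(Abs_fps a * inverse (Abs_fps a)) $ m = 0" using inverse_mult_eq_1'[OF A0] that by simp
    then show ?thesis unfolding b_def fps_mult_nth by simp
  qed
  have conv2: "(\<Sum>i=0..m. b i * a (m-i)) = 0" if "m \<ge> 1" for m
  proof -
    have "(inverse (Abs_fps a) * Abs_fps a) $ m = 0" using inverse_mult_eq_1[OF A0] that by simp
    then show ?thesis unfolding b_def fps_mult_nth by simp
  qed
  have phi0: "phi 0 = 0" using phi_add[of 0 0] by simp
  have phi_neg: "phi (- c) = - phi c" for c
    using phi_add[of c "-c"] phi0 by (metis minus_unique right_minus)
  have phi_sum: "phi (\<Sum>i\<in>A. f i) = (\<Sum>i\<in>A. phi (f i))" for A and f :: "nat \<Rightarrow> 'k"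
    by (induction A rule: infinite_finite_induct) (simp_all add: phi0 phi_add)
  have phi_m1: "phi ((-1)^j) = (-1)^j" for j
    by (induction j) (simp_all add: phi_mult phi_neg phi_1)
  have comm: "z * phi c = phi c * z" for c z using phi_central by simp
  define F where "F = Abs_fps (\<lambda>n. phi (a n) * x ^ n)"
  define G where "G = Abs_fps (\<lambda>n. phi (b n) * x ^ n)"
  have GF: "G * F = 1"
  proof (rule fps_ext)
    fix m
    have "(G * F) $ m = (\<Sum>i=0..m. phi (b i * a (m-i)) * x ^ m)"
      unfolding fps_mult_nth G_def F_def
    proof (intro sum.cong refl)
      fix i assume "i \<in> {0..m}"
      then have "x ^ m = x ^ i * x ^ (m-i)" by (simp add: power_add[symmetric])
      then show "Abs_fps (\<lambda>n. phi (b n) * x ^ n) $ i * Abs_fps (\<lambda>n. phi (a n) * x ^ n) $ (m - i) =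
          phi (b i * a (m - i)) * x ^ m"
        by (simp add: phi_mult mult.assoc) (metis comm mult.assoc)
    qed
    also have "\<dots> = phi (\<Sum>i=0..m. b i * a (m-i)) * x ^ m" by (simp add: phi_sum sum_distrib_right)
    also have "\<dots> = 1 $ m"
      using conv2[of m] b0 a0 phi0 phi_1 by (cases "m = 0") auto
    finally show "(G * F) $ m = 1 $ m" .
  qed
  define R where "R = fps_right_inverse F 1"
  have FR: "F * R = 1" unfolding R_def by (rule fps_right_inverse) (simp add: F_def a0 phi_1)
  have RG: "R = G"
  proof -
    have "G = G * (F * R)" using FR by simp
    also have "\<dots> = (G * F) * R" by (simp add: mult.assoc)
    finally show ?thesis using GF by simp
  qed
  have key: "phi (a n) * (-1)^j * phi (of_ac (esym j n (q n))) = phi (a (n-j)) * phi (b j)"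
    if n: "n \<ge> 1" and j: "j \<le> n" for n j
  proof -
    define P where "P = Pfk a n"
    have Peq: "P = (\<Sum>c=0..n. monom (a c * b (n-c)) c)"
      unfolding P_def by (rule Pfk_eq[OF a0 b0 conv])
    have coeffP: "coeff P k = a k * b (n-k)" if "k \<le> n" for k
      using that unfolding Peq by (simp add: coeff_sum coeff_monom)
    define L where "L = lead_coeff (map_poly to_ac P)"
    have rt: "map_poly to_ac P = smult L (\<Prod>i=1..n. [:- q n i, 1:])"
      unfolding L_def P_def using roots[OF n] .
    have cf: "to_ac (a k * b (n-k)) = L * ((-1)^(n-k) * esym (n-k) n (q n))" if "k \<le> n" for k
    proof -
      have "coeff (map_poly to_ac P) k = to_ac (a k * b (n-k))"
        using coeffP[OF that] by (simp add: coeff_map_poly)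
      then show ?thesis using rt coeff_prod_esym[OF that, of "q n"] by simp
    qed
    have e0: "esym 0 n (q n) = 1"
    proof -
      have "{S. S \<subseteq> {1..n} \<and> card S = 0} = {{}}"
        using finite_subset[of _ "{1..n}"] by fastforce
      then show ?thesis unfolding esym_def by simp
    qed
    have L: "L = to_ac (a n)" using cf[of n] b0 e0 by simp
    have "to_ac (a (n-j) * b j) = to_ac (a n) * ((-1)^j * esym j n (q n))"
      using cf[of "n-j"] j L by simp
    then have "esym j n (q n) = to_ac (a (n-j) * b j / (a n * (-1)^j))"
      using a_nz[OF n] by (simp add: field_simps)
    then have "of_ac (esym j n (q n)) = a (n-j) * b j / (a n * (-1)^j)"
      by (simp only: of_ac_to_ac)
    then have "phi (a n) * (-1)^j * phi (of_ac (esym j n (q n))) = phi (a n * (-1)^j * (a (n-j) * b j / (a n * (-1)^j)))"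
      by (simp only: phi_mult phi_m1)
    also have "a n * (-1)^j * (a (n-j) * b j / (a n * (-1)^j)) = a (n-j) * b j"
      using a_nz[OF n] by simp
    finally show ?thesis by (simp only: phi_mult)
  qed
  show ?thesis
    unfolding F_def[symmetric] R_def[symmetric] RG
  proof (rule fps_ext)
    fix n
    have lhs: "(F * fps_const y * G) $ n = (\<Sum>i=0..n. phi (a i) * x ^ i * y * (phi (b (n-i)) * x ^ (n-i)))"
      unfolding fps_mult_nth[of "F * fps_const y"] by (simp add: F_def G_def)
    show "(F * fps_const y * G) $ n = Abs_fps (\<lambda>n. if n = 0 then y else phi (a n) * adq phi n (q n) x y) $ n"
    proof (cases "n = 0")
      case True
      then show ?thesis using lhs a0 b0 phi_1 by simp
    next
      case False
      then have n: "n \<ge> 1" by simp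
      have "phi (a n) * adq phi n (q n) x y = (\<Sum>j=0..n. phi (a n) * ((-1)^j * phi (of_ac (esym j n (q n))) * x ^ (n - j) * y * x ^ j))"
        unfolding adq_def by (simp add: sum_distrib_left)
      also have "\<dots> = (\<Sum>j=0..n. phi (a (n-j)) * x ^ (n-j) * y * (phi (b j) * x ^ j))"
      proof (intro sum.cong refl)
        fix j assume "j \<in> {0..n}"
        then have j: "j \<le> n" by simp
        have "phi (a n) * ((-1)^j * phi (of_ac (esym j n (q n))) * x ^ (n - j) * y * x ^ j)
            = (phi (a n) * (-1)^j * phi (of_ac (esym j n (q n)))) * (x ^ (n - j) * y) * x ^ j"
          by (simp add: mult.assoc)
        also have "\<dots> = phi (a (n-j)) * (phi (b j) * (x ^ (n - j) * y)) * x ^ j"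
          using key[OF n j] by (simp add: mult.assoc)
        also have "\<dots> = phi (a (n-j)) * x ^ (n-j) * y * (phi (b j) * x ^ j)"
          by (simp add: phi_central[of "b j"] mult.assoc)
        finally show "phi (a n) * ((-1)^j * phi (of_ac (esym j n (q n))) * x ^ (n - j) * y * x ^ j)
            = phi (a (n-j)) * x ^ (n-j) * y * (phi (b j) * x ^ j)" .
      qed
      also have "\<dots> = (\<Sum>i=0..n. phi (a i) * x ^ i * y * (phi (b (n-i)) * x ^ (n-i)))"
        by (subst sum.atLeastAtMost_rev) (intro sum.cong refl, simp)
      finally show ?thesis using lhs False by simp
    qed
  qed
qed

end
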